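(* Let $m$ be a positive integer divisible by $4$. Then the group $BT(2,m)$ is infinite.
   Context: For integers $n,m\ge1$, $BT(n,m)$ denotes the quotient of the free group $\mathbb{F}_n$ on $n$ generators by the normal subgroup generated by all $x^m$, where $x$ runs over the primitive elements of $\mathbb{F}_n$ (elements belonging to some free basis). *)

theory Defs
  imports "HOL-Algebra.Algebra"
begin

text \<open>A letter (i, False) is the generator number i, (i, True) is its inverse.\<close>
type_synonym letter = "nat \<times> bool"

definition inv_letter :: "letter \<Rightarrow> letter" where
  "inv_letter x = (fst x, \<not> snd x)"

fun reduced :: "letter list \<Rightarrow> bool" where
  "reduced [] = True"
| "reduced [x] = True"
| "reduced (x # y # ys) = (y \<noteq> inv_letter x \<and> reduced (y # ys))"

fun red :: "letter list \<Rightarrow> letter list" where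
  "red [] = []"
| "red (x # xs) = (case red xs of
       [] \<Rightarrow> [x]
     | y # ys \<Rightarrow> (if y = inv_letter x then ys else x # y # ys))"

definition free_group :: "nat \<Rightarrow> letter list monoid" where
  "free_group n = \<lparr> carrier = {w. reduced w \<and> (\<forall>x\<in>set w. fst x < n)},
                    monoid.mult = (\<lambda>u v. red (u @ v)),
                    monoid.one = [] \<rparr>"

definition eval_word :: "('g, 'm) monoid_scheme \<Rightarrow> (nat \<Rightarrow> 'g) \<Rightarrow> letter list \<Rightarrow> 'g" where
  "eval_word G b w =
     foldr (\<lambda>x acc. (if snd x then inv\<^bsub>G\<^esub> (b (fst x)) else b (fst x)) \<otimes>\<^bsub>G\<^esub> acc) w \<one>\<^bsub>G\<^esub>"

definition free_basis :: "nat \<Rightarrow> nat \<Rightarrow> (nat \<Rightarrow> letter list) \<Rightarrow> bool" where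
  "free_basis n k b \<longleftrightarrow> (\<forall>i<k. b i \<in> carrier (free_group n)) \<and>
     bij_betw (eval_word (free_group n) b) (carrier (free_group k)) (carrier (free_group n))"

definition primitive :: "nat \<Rightarrow> letter list \<Rightarrow> bool" where
  "primitive n x \<longleftrightarrow> (\<exists>k b. free_basis n k b \<and> (\<exists>i<k. x = b i))"

definition normal_closure :: "('g, 'm) monoid_scheme \<Rightarrow> 'g set \<Rightarrow> 'g set" where
  "normal_closure G S =
     generate G {g \<otimes>\<^bsub>G\<^esub> s \<otimes>\<^bsub>G\<^esub> inv\<^bsub>G\<^esub> g | g s. g \<in> carrier G \<and> s \<in> S}"

definition BT :: "nat \<Rightarrow> nat \<Rightarrow> letter list set monoid" where
  "BT n m = free_group n Mod
     normal_closure (free_group n)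
       {x [^]\<^bsub>free_group n\<^esub> m | x. x \<in> carrier (free_group n) \<and> primitive n x}"

end

theory Submission
  imports Defs "HOL-Library.Infinite_Set"
begin


definition step :: "letter \<Rightarrow> letter list \<Rightarrow> letter list" where
  "step x z = (case z of [] \<Rightarrow> [x] | y # ys \<Rightarrow> (if y = inv_letter x then ys else x # y # ys))"

lemma red_Cons[simp]: "red (x # w) = step x (red w)"
  by (simp add: step_def)

declare red.simps(2)[simp del]

lemma inv_inv_letter[simp]: "inv_letter (inv_letter x) = x"
  by (simp add: inv_letter_def)

lemma inv_letter_neq[simp]: "inv_letter x \<noteq> x" "x \<noteq> inv_letter x"
  by (auto simp: inv_letter_def prod_eq_iff)

lemma reduced_Cons: "reduced (x # w) \<Longrightarrow> reduced w"
  by (cases w) auto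

lemma reduced_step: "reduced z \<Longrightarrow> reduced (step x z)"
  by (cases z) (auto simp: step_def dest: reduced_Cons)

lemma reduced_red: "reduced (red w)"
  by (induction w) (auto simp: red_Cons reduced_step)

lemma red_reduced: "reduced w \<Longrightarrow> red w = w"
proof (induction w)
  case Nil then show ?case by simp
next
  case (Cons x w)
  then have "red w = w" using reduced_Cons by blast
  then show ?case using Cons.prems by (cases w) (auto simp: red_Cons step_def)
qed

lemma red_red[simp]: "red (red w) = red w"
  by (simp add: red_reduced reduced_red)

lemma set_step: "set (step x z) \<subseteq> insert x (set z)"
  by (cases z) (auto simp: step_def)

lemma set_red: "set (red w) \<subseteq> set w"
  by (induction w) (use set_step in \<open>fastforce simp: red_Cons\<close>)+

lemma step_inv: "reduced z \<Longrightarrow> step x (step (inv_letter x) z) = z"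
proof (cases z)
  case Nil then show ?thesis by (simp add: step_def)
next
  case (Cons y ys)
  assume r: "reduced z"
  show ?thesis
  proof (cases "y = x")
    case True
    then show ?thesis using Cons r by (cases ys) (auto simp: step_def)
  next
    case False
    then show ?thesis using Cons by (auto simp: step_def)
  qed
qed

lemma red_left: "red (red u @ v) = red (u @ v)"
proof (induction u)
  case Nil then show ?case by simp
next
  case (Cons x u)
  show ?case
  proof (cases "red u")
    case Nil
    then show ?thesis using Cons.IH by (simp add: step_def)
  next
    case (Cons y ys)
    note Cons2 = this
    show ?thesis
    proof (cases "y = inv_letter x")
      case True
      have "red (x # u @ v) = step x (red (red u @ v))" using Cons.IH by simp
      also have "\<dots> = step x (step y (red (ys @ v)))" using Cons2 by (simp add: red_Cons)
      also have "\<dots> = red (ys @ v)" using True step_inv[OF reduced_red] by simp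
      finally show ?thesis using Cons2 True by (simp add: red_Cons step_def)
    next
      case False
      have "red (x # u @ v) = step x (red (red u @ v))" using Cons.IH by simp
      then show ?thesis using Cons2 False by (simp add: red_Cons step_def)
    qed
  qed
qed

lemma red_right: "red (u @ red v) = red (u @ v)"
  by (induction u) (auto simp: red_Cons)

lemma red_assoc: "red (red (u @ v) @ w) = red (u @ red (v @ w))"
  by (simp add: red_left red_right)

definition winv :: "letter list \<Rightarrow> letter list" where
  "winv u = rev (map inv_letter u)"

lemma red_winv: "red (u @ winv u) = []"
proof (induction u)
  case Nil then show ?case by (simp add: winv_def)
next
  case (Cons x u)
  have "red ((x # u) @ winv (x # u)) = step x (red ((u @ winv u) @ [inv_letter x]))"
    by (simp add: winv_def red_Cons)
  also have "\<dots> = step x (red (red (u @ winv u) @ [inv_letter x]))" by (simp only: red_left)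
  also have "\<dots> = []" using Cons by (simp add: step_def red_Cons)
  finally show ?case .
qed

lemma winv_winv[simp]: "winv (winv u) = u"
  by (simp add: winv_def rev_map comp_def)

lemma red_winv_left: "red (winv u @ u) = []"
  using red_winv[of "winv u"] by simp

lemma carrier_fg: "carrier (free_group n) = {w. reduced w \<and> (\<forall>x\<in>set w. fst x < n)}"
  by (simp add: free_group_def)

lemma mult_fg[simp]: "u \<otimes>\<^bsub>free_group n\<^esub> v = red (u @ v)"
  by (simp add: free_group_def)

lemma one_fg[simp]: "\<one>\<^bsub>free_group n\<^esub> = []"
  by (simp add: free_group_def)

lemma red_in_carrier: "\<forall>x\<in>set w. fst x < n \<Longrightarrow> red w \<in> carrier (free_group n)"
  using set_red[of w] reduced_red[of w] by (auto simp: carrier_fg)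

lemma group_fg: "group (free_group n)"
proof (rule groupI)
  fix x y assume "x \<in> carrier (free_group n)" "y \<in> carrier (free_group n)"
  then show "x \<otimes>\<^bsub>free_group n\<^esub> y \<in> carrier (free_group n)"
    by (simp only: mult_fg, intro red_in_carrier) (auto simp: carrier_fg)
next
  show "\<one>\<^bsub>free_group n\<^esub> \<in> carrier (free_group n)" by (simp add: carrier_fg)
next
  fix x y z
  show "x \<otimes>\<^bsub>free_group n\<^esub> y \<otimes>\<^bsub>free_group n\<^esub> z = x \<otimes>\<^bsub>free_group n\<^esub> (y \<otimes>\<^bsub>free_group n\<^esub> z)"
    by (simp add: red_assoc)
next
  fix x assume "x \<in> carrier (free_group n)"
  then show "\<one>\<^bsub>free_group n\<^esub> \<otimes>\<^bsub>free_group n\<^esub> x = x"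
    by (simp add: carrier_fg red_reduced)
next
  fix x assume x: "x \<in> carrier (free_group n)"
  have "red (winv x) \<in> carrier (free_group n)"
    using x by (intro red_in_carrier) (auto simp: carrier_fg winv_def inv_letter_def)
  moreover have "red (red (winv x) @ x) = []" by (simp add: red_left red_winv_left)
  ultimately show "\<exists>y\<in>carrier (free_group n). y \<otimes>\<^bsub>free_group n\<^esub> x = \<one>\<^bsub>free_group n\<^esub>"
    by auto
qed



definition lv :: "('g, 'm) monoid_scheme \<Rightarrow> (nat \<Rightarrow> 'g) \<Rightarrow> letter \<Rightarrow> 'g" where
  "lv G b x = (if snd x then inv\<^bsub>G\<^esub> (b (fst x)) else b (fst x))"

lemma eval_Nil[simp]: "eval_word G b [] = \<one>\<^bsub>G\<^esub>"
  by (simp add: eval_word_def)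

lemma eval_Cons[simp]: "eval_word G b (x # w) = lv G b x \<otimes>\<^bsub>G\<^esub> eval_word G b w"
  by (simp add: eval_word_def lv_def)

context group begin

lemma lv_closed: "b (fst x) \<in> carrier G \<Longrightarrow> lv G b x \<in> carrier G"
  by (simp add: lv_def)

lemma eval_closed: "\<forall>x\<in>set w. b (fst x) \<in> carrier G \<Longrightarrow> eval_word G b w \<in> carrier G"
  by (induction w) (auto simp: lv_closed)

lemma eval_append:
  "\<forall>x\<in>set u. b (fst x) \<in> carrier G \<Longrightarrow> \<forall>x\<in>set v. b (fst x) \<in> carrier G \<Longrightarrow>
   eval_word G b (u @ v) = eval_word G b u \<otimes> eval_word G b v"
  by (induction u) (auto simp: lv_closed eval_closed m_assoc)

lemma lv_inv: "b (fst x) \<in> carrier G \<Longrightarrow> lv G b x \<otimes> lv G b (inv_letter x) = \<one>"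
  by (simp add: lv_def inv_letter_def)

lemma eval_step:
  assumes "\<forall>y\<in>set (x # z). b (fst y) \<in> carrier G"
  shows "eval_word G b (step x z) = lv G b x \<otimes> eval_word G b z"
proof (cases z)
  case Nil then show ?thesis using assms by (simp add: step_def lv_closed)
next
  case (Cons y ys)
  show ?thesis
  proof (cases "y = inv_letter x")
    case True
    have "lv G b x \<otimes> eval_word G b z = (lv G b x \<otimes> lv G b y) \<otimes> eval_word G b ys"
      using Cons assms by (simp add: m_assoc lv_closed eval_closed)
    also have "\<dots> = eval_word G b ys" using True assms lv_inv[of b x] Cons by (simp add: eval_closed)
    finally show ?thesis using Cons True by (simp add: step_def)
  next
    case False
    then show ?thesis using Cons by (simp add: step_def)
  qed
qed

lemma eval_red: "\<forall>x\<in>set w. b (fst x) \<in> carrier G \<Longrightarrow> eval_word G b (red w) = eval_word G b w"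
proof (induction w)
  case Nil then show ?case by simp
next
  case (Cons x w)
  have "\<forall>y\<in>set (x # red w). b (fst y) \<in> carrier G" using Cons.prems set_red[of w] by auto
  then show ?case using Cons by (simp add: eval_step)
qed

lemma eval_hom:
  assumes "\<forall>i<k. b i \<in> carrier G"
  shows "eval_word G b \<in> hom (free_group k) G"
proof (rule homI)
  fix x assume "x \<in> carrier (free_group k)"
  then show "eval_word G b x \<in> carrier G" using assms by (auto intro!: eval_closed simp: carrier_fg)
next
  fix x y assume "x \<in> carrier (free_group k)" "y \<in> carrier (free_group k)"
  then have "\<forall>z\<in>set (x @ y). b (fst z) \<in> carrier G" "\<forall>z\<in>set x. b (fst z) \<in> carrier G"
     "\<forall>z\<in>set y. b (fst z) \<in> carrier G"
    using assms by (auto simp: carrier_fg)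
  then show "eval_word G b (x \<otimes>\<^bsub>free_group k\<^esub> y) = eval_word G b x \<otimes> eval_word G b y"
    by (simp add: eval_red eval_append)
qed

end

definition cnt :: "nat \<Rightarrow> letter list \<Rightarrow> bool" where
  "cnt i w = odd (length (filter (\<lambda>x. fst x = i) w))"

lemma cnt_Nil[simp]: "cnt i [] = False" by (simp add: cnt_def)
lemma cnt_Cons[simp]: "cnt i (x # w) = ((fst x = i) \<noteq> cnt i w)" by (simp add: cnt_def)
lemma cnt_append[simp]: "cnt i (u @ v) = (cnt i u \<noteq> cnt i v)" by (induction u) auto

lemma cnt_step: "cnt i (step x z) = ((fst x = i) \<noteq> cnt i z)"
  by (cases z) (auto simp: step_def inv_letter_def)

lemma cnt_red[simp]: "cnt i (red w) = cnt i w"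
  by (induction w) (auto simp: cnt_step)



lemma primitive_parity:
  assumes "primitive 2 x"
  shows "cnt 0 x \<or> cnt 1 x"
proof -
  obtain k b i where fb: "free_basis 2 k b" and ik: "i < k" and xb: "x = b i"
    using assms unfolding primitive_def by blast
  define F2 where "F2 = free_group 2"
  define Fk where "Fk = free_group k"
  interpret F2: group F2 unfolding F2_def by (rule group_fg)
  define E where "E = eval_word F2 b"
  have bcar: "\<forall>j<k. b j \<in> carrier F2" using fb unfolding free_basis_def F2_def by blast
  have hom: "E \<in> hom Fk F2" unfolding E_def Fk_def using F2.eval_hom[OF bcar] .
  have bij: "bij_betw E (carrier Fk) (carrier F2)"
    using fb unfolding free_basis_def E_def F2_def Fk_def by blast
  define th where "th = inv_into (carrier Fk) E"
  have th1: "th u \<in> carrier Fk" "E (th u) = u" if "u \<in> carrier F2" for u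
    using that bij unfolding th_def
    by (auto intro: inv_into_into bij_betw_inv_into_right simp: bij_betw_def)
  have th2: "th (E a) = a" if "a \<in> carrier Fk" for a
    using that bij unfolding th_def by (simp add: bij_betw_inv_into_left)
  define chi where "chi u = cnt i (th u)" for u
  have thmul: "th (red (u @ v)) = red (th u @ th v)"
    if "u \<in> carrier F2" "v \<in> carrier F2" for u v
  proof -
    have "red (th u @ th v) = th u \<otimes>\<^bsub>Fk\<^esub> th v" unfolding Fk_def by simp
    then have c: "red (th u @ th v) \<in> carrier Fk"
      using th1 that group.subgroup_self[OF group_fg] unfolding Fk_def
      by (metis monoid.m_closed group.is_monoid group_fg)
    have "E (red (th u @ th v)) = E (th u \<otimes>\<^bsub>Fk\<^esub> th v)" unfolding Fk_def by simp
    also have "\<dots> = E (th u) \<otimes>\<^bsub>F2\<^esub> E (th v)" using hom th1 that by (simp add: hom_mult)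
    also have "\<dots> = red (u @ v)" using th1 that unfolding F2_def by simp
    finally show ?thesis using th2[OF c] by metis
  qed
  have chimul: "chi (red (u @ v)) = (chi u \<noteq> chi v)"
    if "u \<in> carrier F2" "v \<in> carrier F2" for u v
    using thmul[OF that] unfolding chi_def by simp
  have Ecar: "[] \<in> carrier Fk" unfolding Fk_def by (simp add: carrier_fg)
  have "E [] = []" unfolding E_def F2_def by simp
  then have chinil: "chi [] = False" using th2[OF Ecar] unfolding chi_def by simp
  have letc: "[(j, s)] \<in> carrier F2" if "j < 2" for j s using that unfolding F2_def
    by (simp add: carrier_fg)
  have chilet: "chi [(j, s)] = chi [(j, False)]" if "j < 2" for j s
  proof (cases s)
    case True
    have "red ([(j, False)] @ [(j, True)]) = []" by (simp add: step_def inv_letter_def)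
    then have "chi [] = (chi [(j, False)] \<noteq> chi [(j, True)])"
      using chimul[OF letc[OF that] letc[OF that], of False True] by metis
    then show ?thesis using chinil True by simp
  qed simp
  have claim: "chi w = ((cnt 0 w \<and> chi [(0, False)]) \<noteq> (cnt 1 w \<and> chi [(1, False)]))"
    if "w \<in> carrier F2" for w
    using that
  proof (induction w)
    case Nil then show ?case using chinil by simp
  next
    case (Cons x w)
    have red1: "reduced (x # w)" and lt: "\<forall>y\<in>set (x # w). fst y < 2"
      using Cons.prems unfolding F2_def by (auto simp: carrier_fg)
    have wc: "w \<in> carrier F2" using red1 lt reduced_Cons unfolding F2_def by (auto simp: carrier_fg)
    have xc: "[x] \<in> carrier F2" using lt unfolding F2_def by (simp add: carrier_fg)
    have "red ([x] @ w) = x # w" using red_reduced[OF red1] by simp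
    then have "chi (x # w) = (chi [x] \<noteq> chi w)" using chimul[OF xc wc] by simp
    moreover have "chi [x] = chi [(fst x, False)]" using chilet[of "fst x" "snd x"] lt by simp
    moreover have "fst x = 0 \<or> fst x = 1" using lt by auto
    ultimately show ?case using Cons.IH[OF wc] by auto
  qed
  have ic: "[(i, False)] \<in> carrier Fk" using ik unfolding Fk_def by (simp add: carrier_fg)
  have bic: "b i \<in> carrier F2" using bcar ik by blast
  have "E [(i, False)] = red (b i @ [])"
    unfolding E_def F2_def by (simp add: lv_def)
  also have "\<dots> = b i" using bic unfolding F2_def by (simp add: carrier_fg red_reduced)
  finally have "chi (b i) = True" using th2[OF ic] unfolding chi_def by simp
  then show ?thesis using claim[OF bic] xb by auto
qed



datatype qt = Q int int int int

fun qmul :: "qt \<Rightarrow> qt \<Rightarrow> qt" where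
  "qmul (Q a1 b1 c1 d1) (Q a2 b2 c2 d2) =
     Q (a1 * a2 - b1 * b2 - c1 * c2 - d1 * d2) (a1 * b2 + b1 * a2 + c1 * d2 - d1 * c2)
       (a1 * c2 - b1 * d2 + c1 * a2 + d1 * b2) (a1 * d2 + b1 * c2 - c1 * b2 + d1 * a2)"

fun qadd :: "qt \<Rightarrow> qt \<Rightarrow> qt" where
  "qadd (Q a1 b1 c1 d1) (Q a2 b2 c2 d2) = Q (a1 + a2) (b1 + b2) (c1 + c2) (d1 + d2)"

fun qneg :: "qt \<Rightarrow> qt" where "qneg (Q a b c d) = Q (-a) (-b) (-c) (-d)"
fun qconj :: "qt \<Rightarrow> qt" where "qconj (Q a b c d) = Q a (-b) (-c) (-d)"
fun qnorm :: "qt \<Rightarrow> int" where "qnorm (Q a b c d) = a * a + b * b + c * c + d * d"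
fun qre :: "qt \<Rightarrow> int" where "qre (Q a b c d) = a"

lemma qnorm_mul: "qnorm (qmul g h) = qnorm g * qnorm h"
  by (cases g; cases h) (simp add: algebra_simps)

lemma qmul_assoc: "qmul (qmul g h) u = qmul g (qmul h u)"
  by (cases g; cases h; cases u) (simp add: algebra_simps)

lemma qmul_distrib: "qmul g (qadd w u) = qadd (qmul g w) (qmul g u)"
  by (cases g; cases w; cases u) (simp add: algebra_simps)

lemma qadd_assoc: "qadd (qadd g h) u = qadd g (qadd h u)"
  by (cases g; cases h; cases u) (simp add: algebra_simps)

definition QG :: "(qt \<times> qt) monoid" where
  "QG = \<lparr> carrier = {(v, g). qnorm g = 1},
          monoid.mult = (\<lambda>(v, g) (w, h). (qadd v (qmul g w), qmul g h)),
          monoid.one = (Q 0 0 0 0, Q 1 0 0 0) \<rparr>"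

lemma QG_carrier[simp]: "x \<in> carrier QG \<longleftrightarrow> qnorm (snd x) = 1"
  by (cases x) (simp add: QG_def)

lemma QG_mult[simp]: "(v, g) \<otimes>\<^bsub>QG\<^esub> (w, h) = (qadd v (qmul g w), qmul g h)"
  by (simp add: QG_def)

lemma QG_one[simp]: "\<one>\<^bsub>QG\<^esub> = (Q 0 0 0 0, Q 1 0 0 0)"
  by (simp add: QG_def)

lemma group_QG: "group QG"
proof (rule groupI)
  fix x y assume "x \<in> carrier QG" "y \<in> carrier QG"
  then show "x \<otimes>\<^bsub>QG\<^esub> y \<in> carrier QG"
    by (cases x; cases y) (simp add: qnorm_mul)
next
  show "\<one>\<^bsub>QG\<^esub> \<in> carrier QG" by simp
next
  fix x y z
  show "x \<otimes>\<^bsub>QG\<^esub> y \<otimes>\<^bsub>QG\<^esub> z = x \<otimes>\<^bsub>QG\<^esub> (y \<otimes>\<^bsub>QG\<^esub> z)"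
    by (cases x; cases y; cases z) (simp add: qmul_assoc qmul_distrib qadd_assoc)
next
  fix x assume "x \<in> carrier QG"
  then show "\<one>\<^bsub>QG\<^esub> \<otimes>\<^bsub>QG\<^esub> x = x"
    apply (cases x)
    subgoal for v g by (cases v; cases g) simp
    done
next
  fix x assume x: "x \<in> carrier QG"
  obtain v g where xv: "x = (v, g)" by (cases x)
  have n: "qnorm g = 1" using x xv by simp
  have "(qneg (qmul (qconj g) v), qconj g) \<otimes>\<^bsub>QG\<^esub> x = \<one>\<^bsub>QG\<^esub>"
    using n unfolding xv by (cases v; cases g) (simp add: algebra_simps)
  moreover have "(qneg (qmul (qconj g) v), qconj g) \<in> carrier QG"
    using n by (cases g) simp
  ultimately show "\<exists>y\<in>carrier QG. y \<otimes>\<^bsub>QG\<^esub> x = \<one>\<^bsub>QG\<^esub>" by blast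
qed

interpretation QG: group QG by (rule group_QG)

lemma QG_inv: "qnorm g = 1 \<Longrightarrow> inv\<^bsub>QG\<^esub> (v, g) = (qneg (qmul (qconj g) v), qconj g)"
  by (rule QG.inv_equality; cases v; cases g; simp add: algebra_simps)

definition gen :: "nat \<Rightarrow> qt \<times> qt" where
  "gen i = (if i = 0 then (Q 0 0 0 0, Q 0 1 0 0) else if i = 1 then (Q 1 0 0 0, Q 0 0 1 0)
            else (Q 0 0 0 0, Q 1 0 0 0))"

lemma gen_car: "gen i \<in> carrier QG" by (simp add: gen_def)

lemma lv_gen: "lv QG gen x =
   (if fst x = 0 then (if snd x then (Q 0 0 0 0, Q 0 (-1) 0 0) else (Q 0 0 0 0, Q 0 1 0 0))
    else if fst x = 1 then (if snd x then (Q 0 0 1 0, Q 0 0 (-1) 0) else (Q 1 0 0 0, Q 0 0 1 0))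
    else (Q 0 0 0 0, Q 1 0 0 0))"
  by (simp add: lv_def gen_def QG_inv)

definition qsel :: "bool \<Rightarrow> bool \<Rightarrow> qt" where
  "qsel p q = (if \<not> p \<and> \<not> q then Q 1 0 0 0 else if p \<and> \<not> q then Q 0 1 0 0
     else if \<not> p \<and> q then Q 0 0 1 0 else Q 0 0 0 1)"

lemma invariant:
  "snd (eval_word QG gen w) = qsel (cnt 0 w) (cnt 1 w) \<or>
   snd (eval_word QG gen w) = qneg (qsel (cnt 0 w) (cnt 1 w))"
proof (induction w)
  case Nil then show ?case by (simp add: qsel_def)
next
  case (Cons x w)
  obtain v g where e: "eval_word QG gen w = (v, g)" by fastforce
  show ?case using Cons unfolding e
    by (simp add: lv_gen e split: if_splits) (auto simp: qsel_def split: if_splits)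
qed

lemma pow4:
  assumes "qnorm g = 1" "qre g = 0"
  shows "(v, g) [^]\<^bsub>QG\<^esub> (4::nat) = \<one>\<^bsub>QG\<^esub>"
proof -
  have gg: "qmul g g = Q (-1) 0 0 0" using assms by (cases g) (simp add: algebra_simps)
  have x: "(v, g) \<in> carrier QG" using assms by simp
  have "(v, g) [^]\<^bsub>QG\<^esub> (4::nat) = ((v, g) \<otimes>\<^bsub>QG\<^esub> (v, g)) \<otimes>\<^bsub>QG\<^esub> ((v, g) \<otimes>\<^bsub>QG\<^esub> (v, g))"
  proof -
    have p2: "(v, g) [^]\<^bsub>QG\<^esub> (2::nat) = (v, g) \<otimes>\<^bsub>QG\<^esub> (v, g)"
      using x by (simp add: numeral_eq_Suc del: QG_mult QG_one)
    have "(v, g) [^]\<^bsub>QG\<^esub> (4::nat) = (v, g) [^]\<^bsub>QG\<^esub> (2::nat) \<otimes>\<^bsub>QG\<^esub> (v, g) [^]\<^bsub>QG\<^esub> (2::nat)"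
      using QG.nat_pow_mult[OF x, of 2 2] by simp
    then show ?thesis using p2 by simp
  qed
  also have "\<dots> = \<one>\<^bsub>QG\<^esub>"
    by (simp add: gg) (cases v; cases g; simp add: algebra_simps)
  finally show ?thesis .
qed



lemma qre_sel: "p \<or> q \<Longrightarrow> qre (qsel p q) = 0" "p \<or> q \<Longrightarrow> qre (qneg (qsel p q)) = 0"
  by (auto simp: qsel_def)

definition blk :: "nat \<Rightarrow> letter list" where
  "blk n = concat (replicate n [(1, False), (1, False), (0, False), (0, False)])"

lemma eval_blk: "eval_word QG gen (blk n) = (Q (int n) 0 (int n) 0, Q 1 0 0 0)"
  by (induction n) (simp_all add: blk_def lv_gen)

lemma blk_letters: "\<forall>x\<in>set (blk n). fst x < 2"
  by (auto simp: blk_def)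

declare QG_one[simp del] QG_carrier[simp del]

theorem proposition6p1:
  fixes m :: nat
  assumes "m > 0" and "4 dvd m"
  shows "infinite (carrier (BT 2 m))"
proof
  assume fin: "finite (carrier (BT 2 m))"
  define F2 where "F2 = free_group 2"
  interpret F2: group F2 unfolding F2_def by (rule group_fg)
  define phi where "phi = eval_word QG gen"
  have hom: "phi \<in> hom F2 QG" unfolding phi_def F2_def
    using QG.eval_hom[of 2 gen] gen_car by blast
  have gh: "group_hom F2 QG phi"
    by (simp add: group_hom_def group_hom_axioms_def group_QG hom F2.is_group)
  define S where "S = {x [^]\<^bsub>F2\<^esub> m | x. x \<in> carrier F2 \<and> primitive 2 x}"
  define N where "N = normal_closure F2 S"
  have BT: "BT 2 m = F2 Mod N" unfolding BT_def N_def S_def F2_def by simp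
  have Sc: "s \<in> carrier F2 \<and> phi s = \<one>\<^bsub>QG\<^esub>" if sS0: "s \<in> S" for s
  proof -
    obtain x where xs: "s = x [^]\<^bsub>F2\<^esub> m" and xc: "x \<in> carrier F2" and px: "primitive 2 x"
      using sS0 unfolding S_def by blast
    obtain v g where e: "phi x = (v, g)" by fastforce
    have "phi x \<in> carrier QG" using hom xc by (blast intro: hom_in_carrier)
    then have n: "qnorm g = 1" using e by (simp add: QG_carrier)
    have "qre g = 0" using invariant[of x] primitive_parity[OF px] qre_sel e
      unfolding phi_def by (metis snd_conv)
    then have p4: "phi x [^]\<^bsub>QG\<^esub> (4::nat) = \<one>\<^bsub>QG\<^esub>" using pow4 n e by simp
    obtain k where mk: "m = 4 * k" using assms(2) by blast
    have "phi s = phi x [^]\<^bsub>QG\<^esub> m" using group_hom.hom_nat_pow[OF gh xc] xs by simp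
    also have "\<dots> = (phi x [^]\<^bsub>QG\<^esub> (4::nat)) [^]\<^bsub>QG\<^esub> k"
      using QG.nat_pow_pow[of "phi x" 4 k] \<open>phi x \<in> carrier QG\<close> mk by simp
    also have "\<dots> = \<one>\<^bsub>QG\<^esub>" unfolding p4 by (rule QG.nat_pow_one)
    finally show ?thesis using xs xc by simp
  qed
  have Sk: "{g \<otimes>\<^bsub>F2\<^esub> s \<otimes>\<^bsub>F2\<^esub> inv\<^bsub>F2\<^esub> g | g s. g \<in> carrier F2 \<and> s \<in> S} \<subseteq> kernel F2 QG phi"
  proof
    fix y assume "y \<in> {g \<otimes>\<^bsub>F2\<^esub> s \<otimes>\<^bsub>F2\<^esub> inv\<^bsub>F2\<^esub> g | g s. g \<in> carrier F2 \<and> s \<in> S}"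
    then obtain g s where y: "y = g \<otimes>\<^bsub>F2\<^esub> s \<otimes>\<^bsub>F2\<^esub> inv\<^bsub>F2\<^esub> g" and gc: "g \<in> carrier F2" and sS: "s \<in> S"
      by blast
    have sc: "s \<in> carrier F2" and ps: "phi s = \<one>\<^bsub>QG\<^esub>" using Sc[OF sS] by auto
    have pg: "phi g \<in> carrier QG" using hom gc by (blast intro: hom_in_carrier)
    have "phi y = phi g \<otimes>\<^bsub>QG\<^esub> phi s \<otimes>\<^bsub>QG\<^esub> inv\<^bsub>QG\<^esub> phi g"
      using y gc sc group_hom.hom_mult[OF gh] group_hom.hom_inv[OF gh] by simp
    also have "\<dots> = \<one>\<^bsub>QG\<^esub>" using ps pg by simp
    finally show "y \<in> kernel F2 QG phi" using y gc sc by (simp add: kernel_def)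
  qed
  have Nk: "N \<subseteq> kernel F2 QG phi"
    unfolding N_def normal_closure_def
    by (rule F2.generate_subgroup_incl[OF Sk group_hom.subgroup_kernel[OF gh]])
  have oneN: "[] \<in> N" unfolding N_def normal_closure_def F2_def
    using generate.one[of "free_group 2"] by simp
  define f where "f C = phi (SOME a. a \<in> C)" for C
  have sub: "phi ` carrier F2 \<subseteq> f ` carrier (BT 2 m)"
  proof
    fix z assume "z \<in> phi ` carrier F2"
    then obtain a where ac: "a \<in> carrier F2" and z: "z = phi a" by blast
    have Nc: "N \<subseteq> carrier F2" using Nk by (auto simp: kernel_def)
    have C: "N #>\<^bsub>F2\<^esub> a \<in> carrier (BT 2 m)"
      unfolding BT using Nc ac by (auto simp: FactGroup_def RCOSETS_def)
    have "[] \<otimes>\<^bsub>F2\<^esub> a = a" using ac unfolding F2_def by (simp add: carrier_fg red_reduced)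
    then have "a \<in> N #>\<^bsub>F2\<^esub> a" using oneN unfolding r_coset_def by force
    then have "(SOME a'. a' \<in> N #>\<^bsub>F2\<^esub> a) \<in> N #>\<^bsub>F2\<^esub> a" by (rule someI)
    then obtain h where hN: "h \<in> N" and hs: "(SOME a'. a' \<in> N #>\<^bsub>F2\<^esub> a) = h \<otimes>\<^bsub>F2\<^esub> a"
      unfolding r_coset_def by blast
    have "phi h = \<one>\<^bsub>QG\<^esub>" "h \<in> carrier F2" using hN Nk by (auto simp: kernel_def)
    then have "f (N #>\<^bsub>F2\<^esub> a) = phi a"
      unfolding f_def hs using group_hom.hom_mult[OF gh] ac hom
      by (simp add: hom_in_carrier)
    then show "z \<in> f ` carrier (BT 2 m)" using C z by force
  qed
  have rng: "range (\<lambda>n. (Q (int n) 0 (int n) 0, Q 1 0 0 0)) \<subseteq> phi ` carrier F2"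
  proof
    fix z assume "z \<in> range (\<lambda>n. (Q (int n) 0 (int n) 0, Q 1 0 0 0))"
    then obtain n where z: "z = (Q (int n) 0 (int n) 0, Q 1 0 0 0)" by blast
    have "red (blk n) \<in> carrier F2" unfolding F2_def using blk_letters by (rule red_in_carrier)
    moreover have "phi (red (blk n)) = z"
      unfolding phi_def z using QG.eval_red[of "blk n" gen] gen_car eval_blk by simp
    ultimately show "z \<in> phi ` carrier F2" by force
  qed
  have "inj (\<lambda>n. (Q (int n) 0 (int n) 0, Q 1 0 0 0))" by (rule injI) simp
  then have "infinite (range (\<lambda>n. (Q (int n) 0 (int n) 0, Q 1 0 0 0)))"
    by (rule range_inj_infinite)
  moreover have "finite (phi ` carrier F2)" using sub fin finite_subset by blast
  ultimately show False using rng finite_subset by blast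
qed


end
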